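(* Let $d\geq 2$ and $N\ge1$ be integers, and let $X_d$, $X_N$, $X_2$ be $\chi^2$ random variables with $d$, $N$ and $2$ degrees of freedom respectively, with $X_d$ and $X_N$ independent. Then the function $$x\mapsto\frac{\mathbb E\big[(X_d-x\frac{X_N}{N})_+\big]}{\mathbb E\big[(X_2-x)_+\big]}$$ is increasing on $\{x\geq d\}$.
   Context: $(y)_+=\max(y,0)$. *)

theory Defs
  imports "HOL-Probability.Probability"
begin

definition chi_sq_density :: "nat \<Rightarrow> real \<Rightarrow> real" where
  "chi_sq_density k t =
     (if t > 0 then t powr (real k / 2 - 1) * exp (- t / 2) / (2 powr (real k / 2) * Gamma (real k / 2))
      else 0)"

end

theory Submission
  imports Defs
begin

lemma chi_meas[measurable]: "chi_sq_density k \<in> borel_measurable borel"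
  unfolding chi_sq_density_def by measurable

definition Jf :: "nat \<Rightarrow> real \<Rightarrow> real \<Rightarrow> ennreal" where
  "Jf k a r = ennreal (if r > 0 then (a + r) powr (real k / 2 - 1) * exp (- r / 2)
        / (2 powr (real k / 2) * Gamma (real k / 2)) * r else 0)"

definition J :: "nat \<Rightarrow> real \<Rightarrow> ennreal" where
  "J k a = (\<integral>\<^sup>+r. Jf k a r \<partial>lborel)"

lemma Jf_meas[measurable]: "case_prod (Jf k) \<in> borel_measurable (borel \<Otimes>\<^sub>M borel)"
  unfolding Jf_def by measurable

lemma J_meas[measurable]: "J k \<in> borel_measurable borel"
  unfolding J_def by measurable

lemma shift:
  assumes "a \<ge> 0"
  shows "(\<integral>\<^sup>+s. ennreal (chi_sq_density k s) * ennreal (max (s - a) 0) \<partial>lborel)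
        = ennreal (exp (- a / 2)) * J k a"
proof -
  have "(\<integral>\<^sup>+s. ennreal (chi_sq_density k s) * ennreal (max (s - a) 0) \<partial>lborel)
      = (\<integral>\<^sup>+r. ennreal (chi_sq_density k (a + 1 * r)) * ennreal (max ((a + 1 * r) - a) 0) \<partial>lborel)"
    using nn_integral_real_affine[of "\<lambda>s. ennreal (chi_sq_density k s) * ennreal (max (s - a) 0)" 1 a] by simp
  also have "\<dots> = (\<integral>\<^sup>+r. ennreal (exp (- a / 2)) * Jf k a r \<partial>lborel)"
  proof (rule nn_integral_cong)
    fix r :: real
    show "ennreal (chi_sq_density k (a + 1 * r)) * ennreal (max ((a + 1 * r) - a) 0)
        = ennreal (exp (- a / 2)) * Jf k a r"
    proof (cases "r > 0")
      case True
      have "chi_sq_density k (a + r) * r = exp (- a / 2) * ((a + r) powr (real k / 2 - 1) * exp (- r / 2)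
        / (2 powr (real k / 2) * Gamma (real k / 2)) * r)"
        using True assms by (simp add: chi_sq_density_def exp_add[symmetric] field_simps)
      have "ennreal (chi_sq_density k (a + 1 * r)) * ennreal (max ((a + 1 * r) - a) 0)
          = ennreal (chi_sq_density k (a + r) * r)"
        using True by (simp add: ennreal_mult'')
      also have "\<dots> = ennreal (exp (- a / 2)) * ennreal ((a + r) powr (real k / 2 - 1) * exp (- r / 2)
        / (2 powr (real k / 2) * Gamma (real k / 2)) * r)"
        unfolding \<open>chi_sq_density k (a + r) * r = _\<close> by (rule ennreal_mult') simp
      finally show ?thesis using True by (simp add: Jf_def)
    next
      case False
      then show ?thesis by (simp add: Jf_def)
    qed
  qed
  also have "\<dots> = ennreal (exp (- a / 2)) * J k a"
    unfolding J_def by (rule nn_integral_cmult) measurable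
  finally show ?thesis .
qed

lemma J_mono:
  assumes "k \<ge> 2" "0 \<le> a" "a \<le> b"
  shows "J k a \<le> J k b"
  unfolding J_def
proof (rule nn_integral_mono)
  fix r :: real
  show "Jf k a r \<le> Jf k b r"
  proof (cases "r > 0")
    case True
    have e: "real k / 2 - 1 \<ge> 0" using assms by simp
    have "(a + r) powr (real k / 2 - 1) \<le> (b + r) powr (real k / 2 - 1)"
      by (rule powr_mono2[OF e]) (use True assms in auto)
    moreover have "0 < 2 powr (real k / 2) * Gamma (real k / 2)" using assms by simp
    moreover have "0 \<le> exp (- r / 2) * r" using True by simp
    ultimately have "(a + r) powr (real k / 2 - 1) * (exp (- r / 2) * r) / (2 powr (real k / 2) * Gamma (real k / 2))
       \<le> (b + r) powr (real k / 2 - 1) * (exp (- r / 2) * r) / (2 powr (real k / 2) * Gamma (real k / 2))"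
      by (intro divide_right_mono mult_right_mono) auto
    then show ?thesis using True unfolding Jf_def
      by (intro ennreal_leI) (simp add: mult.assoc)
  qed (simp add: Jf_def)
qed


lemma chi_nonneg: "chi_sq_density k t \<ge> 0"
proof (cases "k = 0")
  case True then show ?thesis by (simp add: chi_sq_density_def)
next
  case False then show ?thesis unfolding chi_sq_density_def
    by (auto intro!: divide_nonneg_pos mult_pos_pos)
qed

lemma scale_real:
  assumes "x \<ge> 0" "N \<ge> 1" "v > 0"
  defines "l \<equiv> real N / (real N + x)"
  shows "l * chi_sq_density N (l * v) * exp (- (x * (l * v) / real N) / 2)
       = l powr (real N / 2) * chi_sq_density N v"
proof -
  have lpos: "l > 0" using assms unfolding l_def by auto
  have lv: "l * v > 0" using lpos assms by simp
  have e: "exp (- (l * v) / 2) * exp (- (x * (l * v) / real N) / 2) = exp (- v / 2)"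
  proof -
    have np: "real N + x > 0" "real N > 0" using assms by auto
    have ln: "l * (real N + x) / real N = 1" using np unfolding l_def by simp
    have "- (l * v) / 2 + - (x * (l * v) / real N) / 2 = - (v / 2) * (l * (real N + x) / real N)"
      using np by (simp add: field_simps)
    then show ?thesis using ln by (simp add: exp_add[symmetric])
  qed
  have p: "l * (l * v) powr (real N / 2 - 1) = l powr (real N / 2) * v powr (real N / 2 - 1)"
  proof -
    have "(l * v) powr (real N / 2 - 1) = l powr (real N / 2 - 1) * v powr (real N / 2 - 1)"
      using lpos assms(3) by (intro powr_mult)
    moreover have "l * l powr (real N / 2 - 1) = l powr (real N / 2)"
    proof -
      have "l powr (real N / 2) = l powr (1 + (real N / 2 - 1))" by simp
      also have "\<dots> = l powr 1 * l powr (real N / 2 - 1)" by (rule powr_add)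
      finally show ?thesis using lpos by simp
    qed
    ultimately show ?thesis by (metis mult.assoc)
  qed
  have "l * chi_sq_density N (l * v) * exp (- (x * (l * v) / real N) / 2)
      = (l * (l * v) powr (real N / 2 - 1)) * (exp (- (l * v) / 2) * exp (- (x * (l * v) / real N) / 2))
        / (2 powr (real N / 2) * Gamma (real N / 2))"
    using lv by (simp add: chi_sq_density_def)
  also have "\<dots> = l powr (real N / 2) * chi_sq_density N v"
    unfolding p e using assms by (simp add: chi_sq_density_def)
  finally show ?thesis .
qed

lemma scale:
  assumes "x \<ge> 0" "N \<ge> 1"
  shows "(\<integral>\<^sup>+u. ennreal (chi_sq_density N u) * (ennreal (exp (- (x * u / real N) / 2)) * J k (x * u / real N)) \<partial>lborel)
      = ennreal ((real N / (real N + x)) powr (real N / 2)) *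
        (\<integral>\<^sup>+v. ennreal (chi_sq_density N v) * J k (x * v / (real N + x)) \<partial>lborel)"
proof -
  define l where "l = real N / (real N + x)"
  have lpos: "l > 0" using assms unfolding l_def by auto
  let ?F = "\<lambda>u. ennreal (chi_sq_density N u) * (ennreal (exp (- (x * u / real N) / 2)) * J k (x * u / real N))"
  have "(\<integral>\<^sup>+u. ?F u \<partial>lborel) = ennreal \<bar>l\<bar> * (\<integral>\<^sup>+v. ?F (0 + l * v) \<partial>lborel)"
    by (rule nn_integral_real_affine) (use lpos in auto)
  also have "\<dots> = (\<integral>\<^sup>+v. ennreal l * ?F (l * v) \<partial>lborel)"
    using lpos by (subst nn_integral_cmult) auto
  also have "\<dots> = (\<integral>\<^sup>+v. ennreal (l powr (real N / 2)) * (ennreal (chi_sq_density N v) * J k (x * v / (real N + x))) \<partial>lborel)"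
  proof (rule nn_integral_cong)
    fix v :: real
    show "ennreal l * ?F (l * v) = ennreal (l powr (real N / 2)) * (ennreal (chi_sq_density N v) * J k (x * v / (real N + x)))"
    proof (cases "v > 0")
      case True
      have np: "real N + x > 0" "real N > 0" using assms by auto
      have ln: "l / real N = 1 / (real N + x)" using np unfolding l_def by simp
      have arg: "x * (l * v) / real N = x * v / (real N + x)"
      proof -
        have "x * (l * v) / real N = x * v * (l / real N)" by simp
        then show ?thesis unfolding ln by simp
      qed
      have "ennreal l * ?F (l * v) = ennreal (l * chi_sq_density N (l * v) * exp (- (x * (l * v) / real N) / 2)) * J k (x * (l * v) / real N)"
        using lpos chi_nonneg[of N "l * v"]
        by (simp add: ennreal_mult' mult.assoc)
      also have "\<dots> = ennreal (l powr (real N / 2) * chi_sq_density N v) * J k (x * v / (real N + x))"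
        using scale_real[OF assms True] arg unfolding l_def by simp
      also have "\<dots> = ennreal (l powr (real N / 2)) * (ennreal (chi_sq_density N v) * J k (x * v / (real N + x)))"
        by (simp add: ennreal_mult' mult.assoc)
      finally show ?thesis .
    next
      case False
      then have "l * v \<le> 0" using lpos by (simp add: mult_nonpos_nonneg mult_le_0_iff)
      then show ?thesis using False by (simp add: chi_sq_density_def)
    qed
  qed
  also have "\<dots> = ennreal (l powr (real N / 2)) * (\<integral>\<^sup>+v. ennreal (chi_sq_density N v) * J k (x * v / (real N + x)) \<partial>lborel)"
    by (rule nn_integral_cmult) measurable
  finally show ?thesis unfolding l_def .
qed


lemma scalar_mono:
  assumes "0 \<le> x1" "x1 \<le> x2" "N \<ge> 1"
  shows "exp (x1 / 2) * (real N / (real N + x1)) powr (real N / 2)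
       \<le> exp (x2 / 2) * (real N / (real N + x2)) powr (real N / 2)"
proof -
  have np: "real N > 0" using assms by simp
  have p1: "real N + x1 > 0" "real N + x2 > 0" using assms by auto
  have key: "real N * (ln (real N + x2) - ln (real N + x1)) \<le> x2 - x1"
  proof -
    have "ln (real N + x2) - ln (real N + x1) = ln ((real N + x2) / (real N + x1))"
      using p1 by (simp add: ln_div)
    also have "\<dots> \<le> (real N + x2) / (real N + x1) - 1"
      using p1 by (intro ln_le_minus_one) auto
    also have "\<dots> = (x2 - x1) / (real N + x1)" using p1 by (simp add: field_simps)
    finally have "real N * (ln (real N + x2) - ln (real N + x1)) \<le> real N * ((x2 - x1) / (real N + x1))"
      using np by (intro mult_left_mono) auto
    also have "\<dots> \<le> x2 - x1"
    proof -
      have "real N * ((x2 - x1) / (real N + x1)) = (x2 - x1) * (real N / (real N + x1))" by simp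
      also have "\<dots> \<le> (x2 - x1) * 1"
        using assms p1 by (intro mult_left_mono) auto
      finally show ?thesis by simp
    qed
    finally show ?thesis .
  qed
  have e1: "exp (x1 / 2) * (real N / (real N + x1)) powr (real N / 2)
      = exp (x1 / 2 + real N / 2 * (ln (real N) - ln (real N + x1)))"
    using np p1 by (simp add: powr_def ln_div exp_add)
  have e2: "exp (x2 / 2) * (real N / (real N + x2)) powr (real N / 2)
      = exp (x2 / 2 + real N / 2 * (ln (real N) - ln (real N + x2)))"
    using np p1 by (simp add: powr_def ln_div exp_add)
  show ?thesis unfolding e1 e2 using key by (simp add: algebra_simps)
qed


lemma frac_mono:
  assumes "0 \<le> x1" "x1 \<le> x2" "N \<ge> 1" "v \<ge> 0"
  shows "x1 * v / (real N + x1) \<le> x2 * v / (real N + x2)"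
proof -
  have p: "real N + x1 > 0" "real N + x2 > 0" using assms by auto
  have "x1 / (real N + x1) \<le> x2 / (real N + x2)"
    using p assms by (simp add: divide_simps) (simp add: algebra_simps mult_right_mono)
  then have "x1 / (real N + x1) * v \<le> x2 / (real N + x2) * v"
    using assms by (intro mult_right_mono) auto
  then show ?thesis by simp
qed

theorem lemma5:
  fixes M :: "'a measure" and Xd XN X2 :: "'a \<Rightarrow> real" and d N :: nat
  assumes "prob_space M"
    and "d \<ge> 2" and "N \<ge> 1"
    and "distributed M lborel Xd (\<lambda>t. ennreal (chi_sq_density d t))"
    and "distributed M lborel XN (\<lambda>t. ennreal (chi_sq_density N t))"
    and "distributed M lborel X2 (\<lambda>t. ennreal (chi_sq_density 2 t))"
    and "prob_space.indep_var M borel Xd borel XN"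
  shows "mono_on {real d..}
           (\<lambda>x. prob_space.expectation M (\<lambda>\<omega>. max (Xd \<omega> - x * XN \<omega> / real N) 0)
                / prob_space.expectation M (\<lambda>\<omega>. max (X2 \<omega> - x) 0))"
proof -
  interpret prob_space M by fact
  note dd = assms(4) and dN = assms(5) and d2 = assms(6)
  have Xd_m[measurable]: "Xd \<in> borel_measurable M" using distributed_measurable[OF dd] by simp
  have XN_m[measurable]: "XN \<in> borel_measurable M" using distributed_measurable[OF dN] by simp
  have X2_m[measurable]: "X2 \<in> borel_measurable M" using distributed_measurable[OF d2] by simp
  have ind: "distr M lborel Xd \<Otimes>\<^sub>M distr M lborel XN = distr M (lborel \<Otimes>\<^sub>M lborel) (\<lambda>x. (Xd x, XN x))"
  proof -
    from assms(7) have "distr M borel Xd \<Otimes>\<^sub>M distr M borel XN = distr M (borel \<Otimes>\<^sub>M borel) (\<lambda>x. (Xd x, XN x))"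
      unfolding indep_var_distribution_eq by simp
    moreover have "distr M lborel Xd = distr M borel Xd" by (rule distr_cong) auto
    moreover have "distr M lborel XN = distr M borel XN" by (rule distr_cong) auto
    moreover have "distr M (lborel \<Otimes>\<^sub>M lborel) (\<lambda>x. (Xd x, XN x)) = distr M (borel \<Otimes>\<^sub>M borel) (\<lambda>x. (Xd x, XN x))"
      by (rule distr_cong) (auto intro: sets_pair_measure_cong)
    ultimately show ?thesis by simp
  qed
  have joint: "distributed M (lborel \<Otimes>\<^sub>M lborel) (\<lambda>x. (Xd x, XN x))
      (\<lambda>(x, y). ennreal (chi_sq_density d x) * ennreal (chi_sq_density N y))"
    by (rule distributed_joint_indep'[OF _ _ dd dN ind]) (auto intro: lborel.sigma_finite_measure_axioms)
  define A where "A x = (\<integral>\<^sup>+\<omega>. ennreal (max (Xd \<omega> - x * XN \<omega> / real N) 0) \<partial>M)" for x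
  define A' where "A' x = (\<integral>\<^sup>+u. ennreal (chi_sq_density N u) *
      (\<integral>\<^sup>+s. ennreal (chi_sq_density d s) * ennreal (max (s - x * u / real N) 0) \<partial>lborel) \<partial>lborel)" for x
  have Aeq: "A x = A' x" for x
  proof -
    have "A x = (\<integral>\<^sup>+z. (\<lambda>(s, u). ennreal (chi_sq_density d s) * ennreal (chi_sq_density N u)) z
                 * ennreal (max (fst z - x * snd z / real N) 0) \<partial>(lborel \<Otimes>\<^sub>M lborel))"
      unfolding A_def by (subst distributed_nn_integral[OF joint]) auto
    also have "\<dots> = (\<integral>\<^sup>+u. \<integral>\<^sup>+s. ennreal (chi_sq_density N u) *
        (ennreal (chi_sq_density d s) * ennreal (max (s - x * u / real N) 0)) \<partial>lborel \<partial>lborel)"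
      by (subst lborel_pair.nn_integral_snd[symmetric]) (auto simp: ac_simps)
    also have "\<dots> = A' x"
      unfolding A'_def by (intro nn_integral_cong nn_integral_cmult) measurable
    finally show ?thesis .
  qed
  define B where "B x = (\<integral>\<^sup>+v. ennreal (chi_sq_density N v) * J d (x * v / (real N + x)) \<partial>lborel)" for x
  have Aform: "A x = ennreal ((real N / (real N + x)) powr (real N / 2)) * B x" if x0: "x \<ge> 0" for x
  proof -
    have "A x = (\<integral>\<^sup>+u. ennreal (chi_sq_density N u) * (ennreal (exp (- (x * u / real N) / 2)) * J d (x * u / real N)) \<partial>lborel)"
      unfolding Aeq A'_def
    proof (rule nn_integral_cong)
      fix u :: real
      show "ennreal (chi_sq_density N u) *
        (\<integral>\<^sup>+s. ennreal (chi_sq_density d s) * ennreal (max (s - x * u / real N) 0) \<partial>lborel)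
        = ennreal (chi_sq_density N u) * (ennreal (exp (- (x * u / real N) / 2)) * J d (x * u / real N))"
      proof (cases "u > 0")
        case True
        then have "x * u / real N \<ge> 0" using x0 by simp
        then show ?thesis by (simp only: shift)
      next
        case False then show ?thesis by (simp add: chi_sq_density_def)
      qed
    qed
    also have "\<dots> = ennreal ((real N / (real N + x)) powr (real N / 2)) * B x"
      unfolding B_def by (rule scale[OF x0 assms(3)])
    finally show ?thesis .
  qed
  have Aanti: "A x2 \<le> A x1" if "0 \<le> x1" "x1 \<le> x2" for x1 x2
    unfolding Aeq A'_def
  proof (intro nn_integral_mono)
    fix u :: real
    show "ennreal (chi_sq_density N u) *
        (\<integral>\<^sup>+s. ennreal (chi_sq_density d s) * ennreal (max (s - x2 * u / real N) 0) \<partial>lborel)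
        \<le> ennreal (chi_sq_density N u) *
        (\<integral>\<^sup>+s. ennreal (chi_sq_density d s) * ennreal (max (s - x1 * u / real N) 0) \<partial>lborel)"
    proof (cases "u > 0")
      case True
      have "x1 * u \<le> x2 * u" using True that by (intro mult_right_mono) auto
      then have "x1 * u / real N \<le> x2 * u / real N" by (simp add: divide_right_mono)
      then show ?thesis
        by (intro mult_left_mono nn_integral_mono mult_left_mono ennreal_leI) auto
    next
      case False then show ?thesis by (simp add: chi_sq_density_def)
    qed
  qed
  define c where "c = enn2real (J 2 0)"
  have Deq: "(\<integral>\<^sup>+\<omega>. ennreal (max (X2 \<omega> - x) 0) \<partial>M) = ennreal (exp (- x / 2)) * J 2 0" if x0: "x \<ge> 0" for x
  proof -
    have "(\<integral>\<^sup>+\<omega>. ennreal (max (X2 \<omega> - x) 0) \<partial>M)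
        = (\<integral>\<^sup>+t. ennreal (chi_sq_density 2 t) * ennreal (max (t - x) 0) \<partial>lborel)"
      by (subst distributed_nn_integral[OF d2, symmetric]) auto
    also have "\<dots> = ennreal (exp (- x / 2)) * J 2 x" by (rule shift[OF x0])
    also have "J 2 x = J 2 0"
      unfolding J_def by (intro nn_integral_cong) (use x0 in \<open>simp add: Jf_def\<close>)
    finally show ?thesis .
  qed
  have Enum: "expectation (\<lambda>\<omega>. max (Xd \<omega> - x * XN \<omega> / real N) 0) = enn2real (A x)" for x
    unfolding A_def by (rule integral_eq_nn_integral) auto
  have Eden: "expectation (\<lambda>\<omega>. max (X2 \<omega> - x) 0) = exp (- x / 2) * c" if "x \<ge> 0" for x
  proof -
    have "expectation (\<lambda>\<omega>. max (X2 \<omega> - x) 0) = enn2real (\<integral>\<^sup>+\<omega>. ennreal (max (X2 \<omega> - x) 0) \<partial>M)"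
      by (rule integral_eq_nn_integral) auto
    then show ?thesis unfolding Deq[OF that] c_def by (simp add: enn2real_mult)
  qed
  show ?thesis
  proof (rule mono_onI)
    fix x1 x2 assume x1: "x1 \<in> {real d..}" and x2: "x2 \<in> {real d..}" and le: "x1 \<le> x2"
    have x10: "x1 \<ge> 0" using x1 by auto
    have x20: "x2 \<ge> 0" using x2 by auto
    show "expectation (\<lambda>\<omega>. max (Xd \<omega> - x1 * XN \<omega> / real N) 0) / expectation (\<lambda>\<omega>. max (X2 \<omega> - x1) 0)
       \<le> expectation (\<lambda>\<omega>. max (Xd \<omega> - x2 * XN \<omega> / real N) 0) / expectation (\<lambda>\<omega>. max (X2 \<omega> - x2) 0)"
    proof (cases "c = 0")
      case True then show ?thesis unfolding Eden[OF x10] Eden[OF x20] by simp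
    next
      case False
      then have cpos: "c > 0" unfolding c_def using enn2real_nonneg[of "J 2 0"] by linarith
      have r: "enn2real (A x) / (exp (- x / 2) * c) = enn2real (ennreal (exp (x / 2)) * A x) / c" for x
        by (simp add: enn2real_mult exp_minus field_simps)
      have mono: "ennreal (exp (x1 / 2)) * A x1 \<le> ennreal (exp (x2 / 2)) * A x2"
      proof -
        have "ennreal (exp (x1 / 2)) * A x1 = ennreal (exp (x1 / 2) * (real N / (real N + x1)) powr (real N / 2)) * B x1"
          unfolding Aform[OF x10] by (simp add: ennreal_mult' mult.assoc)
        also have "\<dots> \<le> ennreal (exp (x2 / 2) * (real N / (real N + x2)) powr (real N / 2)) * B x2"
        proof -
          have sc: "ennreal (exp (x1 / 2) * (real N / (real N + x1)) powr (real N / 2))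
              \<le> ennreal (exp (x2 / 2) * (real N / (real N + x2)) powr (real N / 2))"
            by (rule ennreal_leI[OF scalar_mono[OF x10 le assms(3)]])
          have "B x1 \<le> B x2" unfolding B_def
          proof (intro nn_integral_mono)
            fix v :: real
            show "ennreal (chi_sq_density N v) * J d (x1 * v / (real N + x1))
                \<le> ennreal (chi_sq_density N v) * J d (x2 * v / (real N + x2))"
            proof (cases "v \<ge> 0")
              case True
              have "0 \<le> x1 * v / (real N + x1)" using True x10 by simp
              then show ?thesis
                by (intro mult_left_mono J_mono[OF assms(2)] frac_mono[OF x10 le assms(3) True]) auto
            next
              case False then show ?thesis by (simp add: chi_sq_density_def)
            qed
          qed
          then show ?thesis by (intro mult_mono sc) auto
        qed
        also have "\<dots> = ennreal (exp (x2 / 2)) * A x2"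
          unfolding Aform[OF x20] by (simp add: ennreal_mult' mult.assoc)
        finally show ?thesis .
      qed
      have "enn2real (ennreal (exp (x1 / 2)) * A x1) \<le> enn2real (ennreal (exp (x2 / 2)) * A x2)"
      proof (cases "A x2 = top")
        case True
        then have "A x1 = top" using Aanti[OF x10 le] by (simp add: top_unique)
        then show ?thesis using True by (simp add: ennreal_mult_top)
      next
        case False
        then show ?thesis using mono by (intro enn2real_mono) (auto simp: ennreal_mult_less_top top.not_eq_extremum)
      qed
      then show ?thesis unfolding Eden[OF x10] Eden[OF x20] Enum r
        using cpos by (intro divide_right_mono) auto
    qed
  qed
qed

end
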